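(* Let $\widetilde{\Sigma}=\widetilde{\Sigma}_1\uplus\cdots\uplus\widetilde{\Sigma}_n$ with pairwise disjoint visibly pushdown alphabets, and let $P_1\subseteq\widetilde{\Sigma}_1^*,\ldots,P_n\subseteq\widetilde{\Sigma}_n^*$ be well-matched visibly pushdown languages. Let $\Sigma'\subseteq\Sigma^{\mathsf{call}}\cup\Sigma^{\mathsf{ret}}$ be such that for all $i$ and all $c,r\in\widetilde{\Sigma}_i$ that are a matching call–return pair in some word of $P_i$, $c\in\Sigma'\Leftrightarrow r\in\Sigma'$. Let $f:\widetilde{\Sigma}^*\to\widetilde{\Sigma}^*$ be a letter-to-letter string homomorphism with $f(a)\in\Sigma^{\mathsf{int}}_i$ if $a\in\Sigma'\cap\widetilde{\Sigma}_i$ (for any $i$), and $f(a)=a$ otherwise. If $\prec$ is a visibly pushdown contextual order on $\widetilde{\Sigma}$, then there is a visibly pushdown contextual order $\prec'$ such that $\mathrm{red}_{\prec'}(P_1\bowtie\cdots\bowtie P_n)=\mathrm{red}_{f(\prec)}(P_1\bowtie\cdots\bowtie P_n)$.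
   Context: A visibly pushdown (VP) alphabet is a finite alphabet partitioned into calls $\Sigma^{\mathsf{call}}$, returns $\Sigma^{\mathsf{ret}}$, internals $\Sigma^{\mathsf{int}}$; subscripts $i$ refer to $\widetilde{\Sigma}_i$, and $\widetilde{\Sigma}$ has the unions. Calls and returns are matched like opening and closing parentheses (internals ignored); a word is well-matched if all are matched. A visibly pushdown automaton (VPA) is a pushdown automaton with bottom symbol $\bot$ pushing one non-$\bot$ symbol on each call, popping the top on each return (reading $\bot$ on empty stack without removing it), stack unchanged on internals; deterministic = one initial state and at most one transition per configuration and letter; complete = at least one. Shuffle $P_1\parallel\cdots\parallel P_n=\{w:\Pi_{\widetilde{\Sigma}_i}(w)\in P_i\ \forall i\}$; a word is well-nested if every matched pair consists of letters from the same $\widetilde{\Sigma}_k$; $P_1\bowtie\cdots\bowtie P_n$ is the set of well-nested words of the shuffle. $\mathbb{I}=\{(a,b):a\in\widetilde{\Sigma}_i,b\in\widetilde{\Sigma}_j,i\ne j\}$, $\equiv_{\mathbb{I}}$ the least reflexive transitive relation with $uabv\equiv_{\mathbb{I}}ubav$ for $(a,b)\in\mathbb{I}$. A contextual order is a map $\prec$ from $\widetilde{\Sigma}^*$ to strict partial orders on $\widetilde{\Sigma}$; it induces $\preceq$: $\sigma\preceq\rho$ iff $\sigma$ is a prefix of $\rho$ or $\sigma=\alpha a\beta$, $\rho=\alpha b\gamma$ with $a\prec_\alpha b$. $\mathrm{red}_\prec(L)=\{w\in L:\forall u\in L,(u\equiv_{\mathbb{I}}w\wedge u\preceq w)\Rightarrow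 u=w\}$. A contextual order is visibly pushdown (VPO) if its values are strict total orders and there is a complete deterministic VPA $A$ over $\widetilde{\Sigma}$ and a map $\mathsf{ord}$ from states of $A$ to strict total orders with $\prec_w=\mathsf{ord}(q)$, $q$ the state reached after reading $w$. The contextual order $f(\prec)$ is defined by $a\ f(\prec)_w\ b\iff f(a)\prec_{f(w)}f(b)$. *)

theory Defs
  imports Main
begin

text \<open>A family of VP alphabets is given by index sets Sig i (i < n) of letters, together
with global sets Call, Ret, Intl of call, return and internal letters (partitioning the
union alphabet). Letters that are neither calls nor returns are internal.\<close>

definition SigU :: "nat \<Rightarrow> (nat \<Rightarrow> 'a set) \<Rightarrow> 'a set" where
  "SigU n Sig = (\<Union>i<n. Sig i)"

inductive well_matched :: "'a set \<Rightarrow> 'a set \<Rightarrow> 'a list \<Rightarrow> bool" for Call Ret where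
  wm_nil: "well_matched Call Ret []"
| wm_int: "a \<notin> Call \<Longrightarrow> a \<notin> Ret \<Longrightarrow> well_matched Call Ret [a]"
| wm_app: "well_matched Call Ret u \<Longrightarrow> well_matched Call Ret v \<Longrightarrow> well_matched Call Ret (u @ v)"
| wm_nest: "c \<in> Call \<Longrightarrow> r \<in> Ret \<Longrightarrow> well_matched Call Ret u \<Longrightarrow> well_matched Call Ret (c # u @ [r])"

definition matched_pair :: "'a set \<Rightarrow> 'a set \<Rightarrow> 'a list \<Rightarrow> nat \<Rightarrow> nat \<Rightarrow> bool" where
  "matched_pair Call Ret w k l \<longleftrightarrow> k < l \<and> l < length w \<and> w ! k \<in> Call \<and> w ! l \<in> Ret \<and>
     well_matched Call Ret (take (l - Suc k) (drop (Suc k) w))"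

definition matching_letters_in :: "'a set \<Rightarrow> 'a set \<Rightarrow> 'a list set \<Rightarrow> 'a \<Rightarrow> 'a \<Rightarrow> bool" where
  "matching_letters_in Call Ret L c r \<longleftrightarrow>
     (\<exists>w\<in>L. \<exists>k l. matched_pair Call Ret w k l \<and> w ! k = c \<and> w ! l = r)"

definition well_nested :: "'a set \<Rightarrow> 'a set \<Rightarrow> nat \<Rightarrow> (nat \<Rightarrow> 'a set) \<Rightarrow> 'a list \<Rightarrow> bool" where
  "well_nested Call Ret n Sig w \<longleftrightarrow>
     (\<forall>k l. matched_pair Call Ret w k l \<longrightarrow> (\<exists>m<n. w ! k \<in> Sig m \<and> w ! l \<in> Sig m))"

definition shuffle :: "nat \<Rightarrow> (nat \<Rightarrow> 'a set) \<Rightarrow> (nat \<Rightarrow> 'a list set) \<Rightarrow> 'a list set" where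
  "shuffle n Sig P = {w \<in> lists (SigU n Sig). \<forall>i<n. filter (\<lambda>a. a \<in> Sig i) w \<in> P i}"

definition bowtie :: "'a set \<Rightarrow> 'a set \<Rightarrow> nat \<Rightarrow> (nat \<Rightarrow> 'a set) \<Rightarrow> (nat \<Rightarrow> 'a list set) \<Rightarrow> 'a list set" where
  "bowtie Call Ret n Sig P = {w \<in> shuffle n Sig P. well_nested Call Ret n Sig w}"

definition indep :: "nat \<Rightarrow> (nat \<Rightarrow> 'a set) \<Rightarrow> 'a \<Rightarrow> 'a \<Rightarrow> bool" where
  "indep n Sig a b \<longleftrightarrow> (\<exists>i<n. \<exists>j<n. i \<noteq> j \<and> a \<in> Sig i \<and> b \<in> Sig j)"

definition swap_step :: "nat \<Rightarrow> (nat \<Rightarrow> 'a set) \<Rightarrow> 'a list \<Rightarrow> 'a list \<Rightarrow> bool" where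
  "swap_step n Sig x y \<longleftrightarrow>
     (\<exists>u v a b. indep n Sig a b \<and> x = u @ [a, b] @ v \<and> y = u @ [b, a] @ v)"

definition trace_eq :: "nat \<Rightarrow> (nat \<Rightarrow> 'a set) \<Rightarrow> 'a list \<Rightarrow> 'a list \<Rightarrow> bool" where
  "trace_eq n Sig = (swap_step n Sig)\<^sup>*\<^sup>*"

definition ctx_le :: "('a list \<Rightarrow> 'a \<Rightarrow> 'a \<Rightarrow> bool) \<Rightarrow> 'a list \<Rightarrow> 'a list \<Rightarrow> bool" where
  "ctx_le prec \<sigma> \<rho> \<longleftrightarrow> (\<exists>t. \<rho> = \<sigma> @ t) \<or>
     (\<exists>\<alpha> a \<beta> b \<gamma>. \<sigma> = \<alpha> @ a # \<beta> \<and> \<rho> = \<alpha> @ b # \<gamma> \<and> prec \<alpha> a b)"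

definition red :: "nat \<Rightarrow> (nat \<Rightarrow> 'a set) \<Rightarrow> ('a list \<Rightarrow> 'a \<Rightarrow> 'a \<Rightarrow> bool) \<Rightarrow> 'a list set \<Rightarrow> 'a list set" where
  "red n Sig prec L = {w \<in> L. \<forall>u\<in>L. (trace_eq n Sig u w \<and> ctx_le prec u w) \<longrightarrow> u = w}"

definition img_order :: "('a \<Rightarrow> 'a) \<Rightarrow> ('a list \<Rightarrow> 'a \<Rightarrow> 'a \<Rightarrow> bool) \<Rightarrow> 'a list \<Rightarrow> 'a \<Rightarrow> 'a \<Rightarrow> bool" where
  "img_order h prec w a b \<longleftrightarrow> prec (map h w) (h a) (h b)"

definition strict_total_on :: "'a set \<Rightarrow> ('a \<Rightarrow> 'a \<Rightarrow> bool) \<Rightarrow> bool" where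
  "strict_total_on A R \<longleftrightarrow> (\<forall>a\<in>A. \<not> R a a) \<and>
     (\<forall>a\<in>A. \<forall>b\<in>A. \<forall>c\<in>A. R a b \<longrightarrow> R b c \<longrightarrow> R a c) \<and>
     (\<forall>a\<in>A. \<forall>b\<in>A. a \<noteq> b \<longrightarrow> R a b \<or> R b a)"

text \<open>States and stack symbols are natural numbers; the bottom symbol is represented by
None (i.e. it is distinct from all pushable stack symbols). A configuration is a state
and a stack (list, top first). Reading a return on the empty stack reads the bottom
symbol and leaves the stack unchanged.\<close>

fun dvpa_run :: "'a set \<Rightarrow> 'a set \<Rightarrow> (nat \<Rightarrow> 'a \<Rightarrow> nat \<times> nat) \<Rightarrow> (nat \<Rightarrow> 'a \<Rightarrow> nat option \<Rightarrow> nat)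
    \<Rightarrow> (nat \<Rightarrow> 'a \<Rightarrow> nat) \<Rightarrow> nat \<times> nat list \<Rightarrow> 'a list \<Rightarrow> nat \<times> nat list" where
  "dvpa_run Call Ret dC dR dI c [] = c"
| "dvpa_run Call Ret dC dR dI (q, s) (a # w) =
     (if a \<in> Call then dvpa_run Call Ret dC dR dI (fst (dC q a), snd (dC q a) # s) w
      else if a \<in> Ret then dvpa_run Call Ret dC dR dI
               (dR q a (case s of [] \<Rightarrow> None | g # _ \<Rightarrow> Some g), tl s) w
      else dvpa_run Call Ret dC dR dI (dI q a, s) w)"

definition is_dvpa :: "'a set \<Rightarrow> 'a set \<Rightarrow> 'a set \<Rightarrow> nat set \<Rightarrow> nat set \<Rightarrow> nat
    \<Rightarrow> (nat \<Rightarrow> 'a \<Rightarrow> nat \<times> nat) \<Rightarrow> (nat \<Rightarrow> 'a \<Rightarrow> nat option \<Rightarrow> nat) \<Rightarrow> (nat \<Rightarrow> 'a \<Rightarrow> nat) \<Rightarrow> bool" where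
  "is_dvpa A Call Ret Q \<Gamma> q0 dC dR dI \<longleftrightarrow> finite Q \<and> finite \<Gamma> \<and> q0 \<in> Q \<and>
     (\<forall>q\<in>Q. \<forall>a\<in>A \<inter> Call. fst (dC q a) \<in> Q \<and> snd (dC q a) \<in> \<Gamma>) \<and>
     (\<forall>q\<in>Q. \<forall>a\<in>A \<inter> Ret. \<forall>g\<in>insert None (Some ` \<Gamma>). dR q a g \<in> Q) \<and>
     (\<forall>q\<in>Q. \<forall>a\<in>A - Call - Ret. dI q a \<in> Q)"

definition vpo :: "'a set \<Rightarrow> 'a set \<Rightarrow> 'a set \<Rightarrow> ('a list \<Rightarrow> 'a \<Rightarrow> 'a \<Rightarrow> bool) \<Rightarrow> bool" where
  "vpo A Call Ret prec \<longleftrightarrow> (\<exists>Q \<Gamma> q0 dC dR dI ord.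
     is_dvpa A Call Ret Q \<Gamma> q0 dC dR dI \<and>
     (\<forall>q\<in>Q. strict_total_on A (ord q)) \<and>
     (\<forall>w\<in>lists A. \<forall>a\<in>A. \<forall>b\<in>A.
        prec w a b \<longleftrightarrow> ord (fst (dvpa_run Call Ret dC dR dI (q0, []) w)) a b))"

inductive nvpa_reach :: "'a set \<Rightarrow> 'a set \<Rightarrow> (nat \<times> 'a \<times> nat \<times> nat) set
    \<Rightarrow> (nat \<times> 'a \<times> nat option \<times> nat) set \<Rightarrow> (nat \<times> 'a \<times> nat) set
    \<Rightarrow> nat \<times> nat list \<Rightarrow> 'a list \<Rightarrow> nat \<times> nat list \<Rightarrow> bool"
  for Call Ret dC dR dI where
  nr_nil: "nvpa_reach Call Ret dC dR dI c [] c"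
| nr_call: "a \<in> Call \<Longrightarrow> (q, a, q', g) \<in> dC \<Longrightarrow> nvpa_reach Call Ret dC dR dI (q', g # s) w c
            \<Longrightarrow> nvpa_reach Call Ret dC dR dI (q, s) (a # w) c"
| nr_ret_bot: "a \<in> Ret \<Longrightarrow> (q, a, None, q') \<in> dR \<Longrightarrow> nvpa_reach Call Ret dC dR dI (q', []) w c
            \<Longrightarrow> nvpa_reach Call Ret dC dR dI (q, []) (a # w) c"
| nr_ret: "a \<in> Ret \<Longrightarrow> (q, a, Some g, q') \<in> dR \<Longrightarrow> nvpa_reach Call Ret dC dR dI (q', s) w c
            \<Longrightarrow> nvpa_reach Call Ret dC dR dI (q, g # s) (a # w) c"
| nr_int: "a \<notin> Call \<Longrightarrow> a \<notin> Ret \<Longrightarrow> (q, a, q') \<in> dI \<Longrightarrow> nvpa_reach Call Ret dC dR dI (q', s) w c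
            \<Longrightarrow> nvpa_reach Call Ret dC dR dI (q, s) (a # w) c"

definition is_vpl :: "'a set \<Rightarrow> 'a set \<Rightarrow> 'a set \<Rightarrow> 'a list set \<Rightarrow> bool" where
  "is_vpl A Call Ret L \<longleftrightarrow> (\<exists>Q \<Gamma> I F dC dR dI.
     finite Q \<and> finite \<Gamma> \<and> I \<subseteq> Q \<and> F \<subseteq> Q \<and>
     dC \<subseteq> Q \<times> A \<times> Q \<times> \<Gamma> \<and> dR \<subseteq> Q \<times> A \<times> insert None (Some ` \<Gamma>) \<times> Q \<and> dI \<subseteq> Q \<times> A \<times> Q \<and>
     L = {w \<in> lists A. \<exists>q0\<in>I. \<exists>qf\<in>F. \<exists>s. nvpa_reach Call Ret dC dR dI (q0, []) w (qf, s)})"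

end

theory Submission
  imports Defs
begin

lemma dvpa_run_append:
  "dvpa_run C R dC dR dI c (x @ y) = dvpa_run C R dC dR dI (dvpa_run C R dC dR dI c x) y"
proof (induction x arbitrary: c)
  case Nil then show ?case by simp
next
  case (Cons a x)
  obtain q s where "c = (q, s)" by fastforce
  then show ?case using Cons by simp
qed

definition pc :: "'a set \<Rightarrow> 'a set \<Rightarrow> 'a list \<Rightarrow> 'a list" where
  "pc C R x = foldl (\<lambda>st a. if a \<in> C then a # st else if a \<in> R then tl st else st) [] x"

lemma pc_snoc: "pc C R (x @ [a]) = (if a \<in> C then a # pc C R x else if a \<in> R then tl (pc C R x) else pc C R x)"
  by (simp add: pc_def)

lemma pc_Nil[simp]: "pc C R [] = []" by (simp add: pc_def)

lemma pc_decomp: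
  "pc C R x = c # t \<Longrightarrow> \<exists>x1 x2. x = x1 @ c # x2 \<and> c \<in> C \<and> well_matched C R x2 \<and> pc C R x1 = t"
proof (induction "length x" arbitrary: x c t rule: less_induct)
  case less
  show ?case
  proof (cases x rule: rev_exhaust)
    case Nil with less.prems show ?thesis by simp
  next
    case (snoc x' a)
    consider "a \<in> C" | "a \<notin> C" "a \<in> R" | "a \<notin> C" "a \<notin> R" by blast
    then show ?thesis
    proof cases
      case 1
      then have "pc C R x = a # pc C R x'" using snoc by (simp add: pc_snoc)
      with less.prems 1 snoc show ?thesis
        by (intro exI[of _ x'] exI[of _ "[]"]) (auto intro: wm_nil)
    next
      case 2
      then have e: "pc C R x = tl (pc C R x')" using snoc by (simp add: pc_snoc)
      with less.prems obtain d where pd: "pc C R x' = d # c # t" by (cases "pc C R x'") auto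
      from less.hyps[of x' d "c # t"] snoc pd obtain y1 y2 where
        y: "x' = y1 @ d # y2" "d \<in> C" "well_matched C R y2" "pc C R y1 = c # t" by auto
      from less.hyps[of y1 c t] y snoc obtain x1 x2 where
        xx: "y1 = x1 @ c # x2" "c \<in> C" "well_matched C R x2" "pc C R x1 = t" by auto
      have "well_matched C R (x2 @ (d # y2 @ [a]))"
        by (intro wm_app wm_nest) (use xx y 2 in auto)
      then show ?thesis using snoc y xx
        by (intro exI[of _ x1] exI[of _ "x2 @ d # y2 @ [a]"]) auto
    next
      case 3
      then have e: "pc C R x' = c # t" using snoc less.prems by (simp add: pc_snoc)
      from less.hyps[of x' c t] snoc e obtain x1 x2 where
        xx: "x' = x1 @ c # x2" "c \<in> C" "well_matched C R x2" "pc C R x1 = t" by auto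
      have "well_matched C R (x2 @ [a])"
        by (intro wm_app wm_int) (use xx 3 in auto)
      then show ?thesis using snoc xx
        by (intro exI[of _ x1] exI[of _ "x2 @ [a]"]) auto
    qed
  qed
qed

lemma pc_matched:
  assumes "p = x @ r # y" "r \<in> R" "pc C R x = c # t"
  shows "\<exists>k. matched_pair C R p k (length x) \<and> p ! k = c"
proof -
  from pc_decomp[OF assms(3)] obtain x1 x2 where
    xx: "x = x1 @ c # x2" "c \<in> C" "well_matched C R x2" by auto
  show ?thesis
    by (rule exI[of _ "length x1"]) (use xx assms in \<open>auto simp: matched_pair_def nth_append\<close>)
qed


lemma trace_eq_filter:
  assumes disj: "\<forall>i<n. \<forall>j<n. i \<noteq> j \<longrightarrow> Sig i \<inter> Sig j = {}"
    and i: "i < n" and te: "trace_eq n Sig u w"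
  shows "filter (\<lambda>a. a \<in> Sig i) u = filter (\<lambda>a. a \<in> Sig i) w"
  using te unfolding trace_eq_def
proof (induction rule: rtranclp_induct)
  case base then show ?case by simp
next
  case (step y z)
  from step.hyps(2) obtain u v a b where
    st: "indep n Sig a b" "y = u @ [a, b] @ v" "z = u @ [b, a] @ v"
    unfolding swap_step_def by blast
  from st(1) obtain i' j' where ij: "i' < n" "j' < n" "i' \<noteq> j'" "a \<in> Sig i'" "b \<in> Sig j'"
    unfolding indep_def by blast
  have "\<not> (a \<in> Sig i \<and> b \<in> Sig i)"
  proof
    assume "a \<in> Sig i \<and> b \<in> Sig i"
    then have "i' = i" "j' = i" using disj ij i by blast+
    with ij show False by simp
  qed
  then have "filter (\<lambda>a. a \<in> Sig i) y = filter (\<lambda>a. a \<in> Sig i) z" using st by auto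
  with step.IH show ?case by simp
qed

lemma nested_top:
  assumes "w \<in> bowtie Call Ret n Sig P" "w = x @ r # y" "r \<in> Ret" "pc Call Ret x = c # t"
  shows "\<exists>m<n. c \<in> Sig m \<and> r \<in> Sig m"
proof -
  from pc_matched[OF assms(2-4)] obtain k where
    k: "matched_pair Call Ret w k (length x)" "w ! k = c" by blast
  from assms(1) have "well_nested Call Ret n Sig w" by (simp add: bowtie_def)
  with k have "\<exists>m<n. w ! k \<in> Sig m \<and> w ! length x \<in> Sig m" unfolding well_nested_def by blast
  then show ?thesis using k assms(2) by simp
qed

lemma pc_filter:
  assumes disj: "\<forall>i<n. \<forall>j<n. i \<noteq> j \<longrightarrow> Sig i \<inter> Sig j = {}"
    and w: "w \<in> bowtie Call Ret n Sig P" and i: "i < n"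
  shows "w = x @ z \<Longrightarrow> pc Call Ret (filter (\<lambda>a. a \<in> Sig i) x) = filter (\<lambda>a. a \<in> Sig i) (pc Call Ret x)"
proof (induction x arbitrary: z rule: rev_induct)
  case Nil then show ?case by simp
next
  case (snoc a x')
  have IH: "pc Call Ret (filter (\<lambda>a. a \<in> Sig i) x') = filter (\<lambda>a. a \<in> Sig i) (pc Call Ret x')"
    using snoc by auto
  consider "a \<in> Call" | "a \<notin> Call" "a \<in> Ret" | "a \<notin> Call" "a \<notin> Ret" by blast
  then show ?case
  proof cases
    case 1 then show ?thesis using IH by (auto simp: pc_snoc)
  next
    case 3 then show ?thesis using IH by (auto simp: pc_snoc)
  next
    case 2
    show ?thesis
    proof (cases "pc Call Ret x'")
      case Nil then show ?thesis using IH 2 by (auto simp: pc_snoc)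
    next
      case (Cons c t)
      from nested_top[OF w _ 2(2) Cons, of z] snoc.prems obtain m where
        m: "m < n" "c \<in> Sig m" "a \<in> Sig m" by auto
      show ?thesis
      proof (cases "m = i")
        case True then show ?thesis using IH 2 m Cons by (auto simp: pc_snoc)
      next
        case False
        then have "a \<notin> Sig i" "c \<notin> Sig i" using disj m i by blast+
        then show ?thesis using IH 2 m Cons by (auto simp: pc_snoc)
      qed
    qed
  qed
qed

definition good :: "'a set \<Rightarrow> 'a set \<Rightarrow> 'a set \<Rightarrow> 'a list \<Rightarrow> bool" where
  "good C R Sp w \<longleftrightarrow> (\<forall>x r y c t. w = x @ r # y \<longrightarrow> r \<in> R \<longrightarrow> pc C R x = c # t \<longrightarrow> (c \<in> Sp \<longleftrightarrow> r \<in> Sp))"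

lemma good_prefix: "good C R Sp (x @ z) \<Longrightarrow> good C R Sp x"
  unfolding good_def by (metis append.assoc append_Cons)

lemma bowtie_good:
  assumes disj: "\<forall>i<n. \<forall>j<n. i \<noteq> j \<longrightarrow> Sig i \<inter> Sig j = {}"
    and Sp_match: "\<forall>i<n. \<forall>c\<in>Sig i. \<forall>r\<in>Sig i.
                     matching_letters_in Call Ret (P i) c r \<longrightarrow> (c \<in> Sp \<longleftrightarrow> r \<in> Sp)"
    and w: "w \<in> bowtie Call Ret n Sig P"
  shows "good Call Ret Sp w"
  unfolding good_def
proof (intro allI impI)
  fix x r y c t
  assume a: "w = x @ r # y" "r \<in> Ret" "pc Call Ret x = c # t"
  from nested_top[OF w a] obtain m where m: "m < n" "c \<in> Sig m" "r \<in> Sig m" by blast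
  let ?f = "filter (\<lambda>a. a \<in> Sig m)"
  have pf: "pc Call Ret (?f x) = c # ?f t"
    using pc_filter[OF disj w m(1), of x "r # y"] a m by simp
  have pw: "?f w = ?f x @ r # ?f y" using a m by simp
  have "?f w \<in> P m" using w m unfolding bowtie_def shuffle_def by blast
  from pc_matched[OF pw a(2) pf] obtain k where
    "matched_pair Call Ret (?f w) k (length (?f x)) \<and> ?f w ! k = c" by blast
  moreover have "?f w ! length (?f x) = r" using pw by simp
  ultimately have "matching_letters_in Call Ret (P m) c r"
    unfolding matching_letters_in_def using \<open>?f w \<in> P m\<close> by blast
  then show "c \<in> Sp \<longleftrightarrow> r \<in> Sp" using Sp_match m by blast
qed


definition dC2 :: "'a set \<Rightarrow> ('a \<Rightarrow> 'a) \<Rightarrow> (nat \<Rightarrow> 'a \<Rightarrow> nat \<times> nat) \<Rightarrow> (nat \<Rightarrow> 'a \<Rightarrow> nat) \<Rightarrow> nat \<Rightarrow> 'a \<Rightarrow> nat \<times> nat" where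
  "dC2 Sp h dC dI q a = (if a \<in> Sp then (dI q (h a), 0) else (fst (dC q a), Suc (snd (dC q a))))"

definition dR2 :: "'a set \<Rightarrow> ('a \<Rightarrow> 'a) \<Rightarrow> (nat \<Rightarrow> 'a \<Rightarrow> nat option \<Rightarrow> nat) \<Rightarrow> (nat \<Rightarrow> 'a \<Rightarrow> nat) \<Rightarrow> nat \<Rightarrow> 'a \<Rightarrow> nat option \<Rightarrow> nat" where
  "dR2 Sp h dR dI q a g = (if a \<in> Sp then dI q (h a) else
      (case g of None \<Rightarrow> dR q a None | Some 0 \<Rightarrow> q | Some (Suc x) \<Rightarrow> dR q a (Some x)))"

definition erase :: "nat list \<Rightarrow> nat list" where
  "erase s = map (\<lambda>x. x - 1) (filter (\<lambda>x. x \<noteq> 0) s)"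

lemma sim:
  assumes hSp: "\<forall>a\<in>A. a \<in> Sp \<longrightarrow> h a \<notin> Call \<and> h a \<notin> Ret"
    and hid: "\<forall>a\<in>A. a \<notin> Sp \<longrightarrow> h a = a"
    and Sp: "Sp \<subseteq> Call \<union> Ret"
  shows "\<alpha> \<in> lists A \<Longrightarrow> good Call Ret Sp \<alpha> \<Longrightarrow>
    fst (dvpa_run Call Ret (dC2 Sp h dC dI) (dR2 Sp h dR dI) dI (q0, []) \<alpha>)
      = fst (dvpa_run Call Ret dC dR dI (q0, []) (map h \<alpha>)) \<and>
    erase (snd (dvpa_run Call Ret (dC2 Sp h dC dI) (dR2 Sp h dR dI) dI (q0, []) \<alpha>))
      = snd (dvpa_run Call Ret dC dR dI (q0, []) (map h \<alpha>)) \<and>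
    map (\<lambda>x. x = 0) (snd (dvpa_run Call Ret (dC2 Sp h dC dI) (dR2 Sp h dR dI) dI (q0, []) \<alpha>))
      = map (\<lambda>c. c \<in> Sp) (pc Call Ret \<alpha>)"
proof (induction \<alpha> rule: rev_induct)
  case Nil then show ?case by (simp add: erase_def)
next
  case (snoc a al)
  let ?r1 = "dvpa_run Call Ret (dC2 Sp h dC dI) (dR2 Sp h dR dI) dI"
  let ?r2 = "dvpa_run Call Ret dC dR dI"
  have g: "good Call Ret Sp al" using snoc.prems good_prefix by blast
  have aA: "a \<in> A" using snoc.prems by simp
  obtain q' s' where r1: "?r1 (q0, []) al = (q', s')" by fastforce
  obtain q s where r2: "?r2 (q0, []) (map h al) = (q, s)" by fastforce
  from snoc.IH g snoc.prems r1 r2 have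
    IH: "q' = q" "erase s' = s" "map (\<lambda>x. x = 0) s' = map (\<lambda>c. c \<in> Sp) (pc Call Ret al)" by auto
  have e1: "?r1 (q0, []) (al @ [a]) = ?r1 (q', s') [a]" using r1 by (simp add: dvpa_run_append)
  have e2: "?r2 (q0, []) (map h (al @ [a])) = ?r2 (q, s) [h a]" using r2 by (simp add: dvpa_run_append)
  have gd: "\<And>c t. a \<in> Ret \<Longrightarrow> pc Call Ret al = c # t \<Longrightarrow> (c \<in> Sp \<longleftrightarrow> a \<in> Sp)"
    using snoc.prems(2) unfolding good_def by blast
  consider "a \<in> Call" "a \<in> Sp" | "a \<in> Call" "a \<notin> Sp" | "a \<notin> Call" "a \<in> Ret" "a \<in> Sp"
    | "a \<notin> Call" "a \<in> Ret" "a \<notin> Sp" | "a \<notin> Call" "a \<notin> Ret" by blast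
  then show ?case
  proof cases
    case 1
    then have "h a \<notin> Call" "h a \<notin> Ret" using hSp aA by auto
    then show ?thesis unfolding e1 e2 using 1 IH by (simp add: dC2_def erase_def pc_snoc)
  next
    case 2
    then have "h a = a" using hid aA by auto
    then show ?thesis unfolding e1 e2 using 2 IH by (simp add: dC2_def erase_def pc_snoc)
  next
    case 3
    then have ha: "h a \<notin> Call" "h a \<notin> Ret" using hSp aA by auto
    show ?thesis
    proof (cases s')
      case Nil
      then show ?thesis unfolding e1 e2 using 3 ha IH by (simp add: dR2_def erase_def pc_snoc)
    next
      case (Cons x s'')
      with IH(3) obtain c t where ct: "pc Call Ret al = c # t" "(x = 0) = (c \<in> Sp)"
        "map (\<lambda>x. x = 0) s'' = map (\<lambda>c. c \<in> Sp) t" by (cases "pc Call Ret al") auto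
      with gd 3 have "x = 0" by auto
      then show ?thesis unfolding e1 e2 using 3 ha IH Cons ct by (simp add: dR2_def erase_def pc_snoc)
    qed
  next
    case 4
    then have ha: "h a = a" using hid aA by auto
    show ?thesis
    proof (cases s')
      case Nil
      then show ?thesis unfolding e1 e2 using 4 ha IH by (simp add: dR2_def erase_def pc_snoc)
    next
      case (Cons x s'')
      with IH(3) obtain c t where ct: "pc Call Ret al = c # t" "(x = 0) = (c \<in> Sp)"
        "map (\<lambda>x. x = 0) s'' = map (\<lambda>c. c \<in> Sp) t" by (cases "pc Call Ret al") auto
      with gd 4 have "x \<noteq> 0" by auto
      then obtain g where "x = Suc g" by (cases x) auto
      then show ?thesis unfolding e1 e2 using 4 ha IH Cons ct by (auto simp: dR2_def erase_def pc_snoc)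
    qed
  next
    case 5
    then have "h a = a" using hid aA Sp by auto
    then show ?thesis unfolding e1 e2 using 5 IH by (simp add: erase_def pc_snoc)
  qed
qed


theorem proposition6p3:
  fixes n :: nat and Sig :: "nat \<Rightarrow> 'a set" and Call Ret Intl :: "'a set"
    and P :: "nat \<Rightarrow> 'a list set" and Sp :: "'a set" and h :: "'a \<Rightarrow> 'a"
    and prec :: "'a list \<Rightarrow> 'a \<Rightarrow> 'a \<Rightarrow> bool"
  assumes fin: "\<forall>i<n. finite (Sig i)"
    and disj: "\<forall>i<n. \<forall>j<n. i \<noteq> j \<longrightarrow> Sig i \<inter> Sig j = {}"
    and part: "Call \<inter> Ret = {}" "Call \<inter> Intl = {}" "Ret \<inter> Intl = {}"
              "SigU n Sig \<subseteq> Call \<union> Ret \<union> Intl"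
    and P: "\<forall>i<n. P i \<subseteq> lists (Sig i) \<and> (\<forall>w\<in>P i. well_matched Call Ret w)
                   \<and> is_vpl (Sig i) Call Ret (P i)"
    and Sp: "Sp \<subseteq> SigU n Sig \<inter> (Call \<union> Ret)"
    and Sp_match: "\<forall>i<n. \<forall>c\<in>Sig i. \<forall>r\<in>Sig i.
                     matching_letters_in Call Ret (P i) c r \<longrightarrow> (c \<in> Sp \<longleftrightarrow> r \<in> Sp)"
    and h_Sp: "\<forall>i<n. \<forall>a\<in>Sp \<inter> Sig i. h a \<in> Intl \<inter> Sig i"
    and h_id: "\<forall>a\<in>SigU n Sig. a \<notin> Sp \<longrightarrow> h a = a"
    and vp: "vpo (SigU n Sig) Call Ret prec"
  shows "\<exists>prec'. vpo (SigU n Sig) Call Ret prec' \<and>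
           red n Sig prec' (bowtie Call Ret n Sig P)
             = red n Sig (img_order h prec) (bowtie Call Ret n Sig P)"
proof -
  define A where "A = SigU n Sig"
  define L where "L = bowtie Call Ret n Sig P"
  from vp obtain Q \<Gamma> q0 dC dR dI ord where
    dv: "is_dvpa A Call Ret Q \<Gamma> q0 dC dR dI" and
    ordt: "\<forall>q\<in>Q. strict_total_on A (ord q)" and
    pr: "\<forall>w\<in>lists A. \<forall>a\<in>A. \<forall>b\<in>A.
        prec w a b \<longleftrightarrow> ord (fst (dvpa_run Call Ret dC dR dI (q0, []) w)) a b"
    unfolding vpo_def A_def by blast
  have finA: "finite A" using fin unfolding A_def SigU_def by auto
  then obtain f :: "'a \<Rightarrow> nat" where inj: "inj_on f A"
    using finite_imp_inj_to_nat_seg by blast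
  have hSig: "\<And>i a. i < n \<Longrightarrow> a \<in> Sig i \<Longrightarrow> h a \<in> Sig i"
  proof -
    fix i a assume "i < n" "a \<in> Sig i"
    then show "h a \<in> Sig i"
      using h_Sp h_id unfolding SigU_def by (cases "a \<in> Sp") auto
  qed
  have hA: "\<And>a. a \<in> A \<Longrightarrow> h a \<in> A" using hSig unfolding A_def SigU_def by blast
  have hSp: "\<forall>a\<in>A. a \<in> Sp \<longrightarrow> h a \<notin> Call \<and> h a \<notin> Ret"
    using h_Sp part(2,3) unfolding A_def SigU_def by blast
  have hSp': "\<And>a. a \<in> A \<Longrightarrow> a \<in> Sp \<Longrightarrow> h a \<in> A - Call - Ret"
    using hSp hA by blast
  have hid: "\<forall>a\<in>A. a \<notin> Sp \<longrightarrow> h a = a" using h_id A_def by blast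
  have Sp': "Sp \<subseteq> Call \<union> Ret" using Sp by blast
  define ord' where "ord' q a b \<longleftrightarrow> ord q (h a) (h b) \<or> (h a = h b \<and> f a < f b)" for q a b
  define run' where "run' = dvpa_run Call Ret (dC2 Sp h dC dI) (dR2 Sp h dR dI) dI"
  define prec' where "prec' w a b \<longleftrightarrow> ord' (fst (run' (q0, []) w)) a b" for w a b
  have st: "strict_total_on A (ord' q)" if q: "q \<in> Q" for q
  proof -
    have o: "strict_total_on A (ord q)" using ordt q by blast
    show ?thesis
      unfolding strict_total_on_def
    proof (intro conjI ballI impI)
      fix a assume "a \<in> A"
      then show "\<not> ord' q a a" using o hA unfolding strict_total_on_def ord'_def by blast
    next
      fix a b c assume abc: "a \<in> A" "b \<in> A" "c \<in> A" "ord' q a b" "ord' q b c"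
      then have "h a \<in> A" "h b \<in> A" "h c \<in> A" using hA by auto
      have tr: "\<And>x y z. x \<in> A \<Longrightarrow> y \<in> A \<Longrightarrow> z \<in> A \<Longrightarrow> ord q x y \<Longrightarrow> ord q y z \<Longrightarrow> ord q x z"
        using o unfolding strict_total_on_def by blast
      from abc(4,5) show "ord' q a c" unfolding ord'_def
      proof (elim disjE conjE)
        assume "ord q (h a) (h b)" "ord q (h b) (h c)"
        then show "ord q (h a) (h c) \<or> h a = h c \<and> f a < f c"
          using tr \<open>h a \<in> A\<close> \<open>h b \<in> A\<close> \<open>h c \<in> A\<close> by blast
      qed auto
    next
      fix a b assume ab: "a \<in> A" "b \<in> A" "a \<noteq> b"
      then have "h a \<in> A" "h b \<in> A" using hA by auto
      moreover have "f a \<noteq> f b" using inj ab inj_on_eq_iff by metis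
      moreover have "h a \<noteq> h b \<Longrightarrow> ord q (h a) (h b) \<or> ord q (h b) (h a)"
        using o calculation(1,2) unfolding strict_total_on_def by blast
      ultimately show "ord' q a b \<or> ord' q b a" unfolding ord'_def
        by (cases "h a = h b") auto
    qed
  qed
  have dv': "is_dvpa A Call Ret Q (insert 0 (Suc ` \<Gamma>)) q0 (dC2 Sp h dC dI) (dR2 Sp h dR dI) dI"
  proof -
    have d: "finite Q" "finite \<Gamma>" "q0 \<in> Q"
      "\<forall>q\<in>Q. \<forall>a\<in>A \<inter> Call. fst (dC q a) \<in> Q \<and> snd (dC q a) \<in> \<Gamma>"
      "\<forall>q\<in>Q. \<forall>a\<in>A \<inter> Ret. \<forall>g\<in>insert None (Some ` \<Gamma>). dR q a g \<in> Q"
      "\<forall>q\<in>Q. \<forall>a\<in>A - Call - Ret. dI q a \<in> Q"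
      using dv unfolding is_dvpa_def by auto
    have c2: "\<forall>q\<in>Q. \<forall>a\<in>A \<inter> Call. fst (dC2 Sp h dC dI q a) \<in> Q \<and> snd (dC2 Sp h dC dI q a) \<in> insert 0 (Suc ` \<Gamma>)"
      using d(4,6) hSp' unfolding dC2_def by auto
    have r2: "\<forall>q\<in>Q. \<forall>a\<in>A \<inter> Ret. \<forall>g\<in>insert None (Some ` insert 0 (Suc ` \<Gamma>)). dR2 Sp h dR dI q a g \<in> Q"
    proof (intro ballI)
      fix q a g assume q: "q \<in> Q" and a: "a \<in> A \<inter> Ret" and g: "g \<in> insert None (Some ` insert 0 (Suc ` \<Gamma>))"
      show "dR2 Sp h dR dI q a g \<in> Q"
      proof (cases "a \<in> Sp")
        case True then show ?thesis using d(6) hSp' q a unfolding dR2_def by auto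
      next
        case False then show ?thesis using d(5) q a g unfolding dR2_def by auto
      qed
    qed
    show ?thesis unfolding is_dvpa_def using d c2 r2 by auto
  qed
  have vpo': "vpo A Call Ret prec'"
    unfolding vpo_def
    by (rule exI[of _ Q], rule exI[of _ "insert 0 (Suc ` \<Gamma>)"], rule exI[of _ q0],
        rule exI[of _ "dC2 Sp h dC dI"], rule exI[of _ "dR2 Sp h dR dI"], rule exI[of _ dI],
        rule exI[of _ ord']) (use dv' st in \<open>auto simp: prec'_def run'_def\<close>)
  have LA: "L \<subseteq> lists A" unfolding L_def bowtie_def shuffle_def A_def by auto
  have pair: "prec' \<alpha> a b \<longleftrightarrow> img_order h prec \<alpha> a b"
    if u: "u \<in> L" and w: "w \<in> L" and te: "trace_eq n Sig u w"
      and ud: "u = \<alpha> @ a # \<beta>" and wd: "w = \<alpha> @ b # \<gamma>" for u w \<alpha> a b \<beta> \<gamma>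
  proof -
    have al: "\<alpha> \<in> lists A" "a \<in> A" "b \<in> A" using u w ud wd LA by auto
    have "good Call Ret Sp w" using bowtie_good[OF disj Sp_match] w L_def by blast
    then have g: "good Call Ret Sp \<alpha>" using wd good_prefix by blast
    have eq: "fst (run' (q0, []) \<alpha>) = fst (dvpa_run Call Ret dC dR dI (q0, []) (map h \<alpha>))"
      using sim[OF hSp hid Sp' al(1) g] unfolding run'_def by blast
    have mA: "map h \<alpha> \<in> lists A" using al(1) hA by auto
    have img: "img_order h prec \<alpha> a b \<longleftrightarrow> ord (fst (dvpa_run Call Ret dC dR dI (q0, []) (map h \<alpha>))) (h a) (h b)"
      unfolding img_order_def using pr mA hA al by blast
    show ?thesis
    proof (cases "a = b")
      case True then show ?thesis unfolding img prec'_def ord'_def eq by simp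
    next
      case False
      obtain i where i: "i < n" "a \<in> Sig i" using al(2) unfolding A_def SigU_def by blast
      obtain j where j: "j < n" "b \<in> Sig j" using al(3) unfolding A_def SigU_def by blast
      have "i \<noteq> j"
      proof
        assume "i = j"
        have "filter (\<lambda>x. x \<in> Sig i) u = filter (\<lambda>x. x \<in> Sig i) w"
          using trace_eq_filter[OF disj i(1) te] .
        then show False using ud wd i j \<open>i = j\<close> False by simp
      qed
      then have dj: "Sig i \<inter> Sig j = {}" using disj i(1) j(1) by simp
      have "h a \<in> Sig i" "h b \<in> Sig j" using hSig i j by auto
      then have "h a \<noteq> h b" using dj by auto
      then show ?thesis unfolding img prec'_def ord'_def eq by simp
    qed
  qed
  have key: "ctx_le prec' u w \<longleftrightarrow> ctx_le (img_order h prec) u w"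
    if "u \<in> L" "w \<in> L" "trace_eq n Sig u w" for u w
    unfolding ctx_le_def using pair[OF that] by blast
  have "red n Sig prec' L = red n Sig (img_order h prec) L"
    unfolding red_def using key by blast
  then show ?thesis using vpo' unfolding A_def L_def by blast
qed

end
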